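(* Let $m\ge1$, $\tau_1\ge\tau_2\ge\dots\ge\tau_m>0$, $b_1,\dots,b_m>0$, and $\psi(u)=\frac12u^2+\sum_{j=1}^mb_j\sqrt{\tau_j-u^2}$ for $0\le u<\sqrt{\tau_m}$. Then: (1) $\psi$ has at most one critical point $u_0\in(0,\sqrt{\tau_m})$; if $u_0<u<\sqrt{\tau_m}$ then $\psi'(u)<0$ and $\psi''(u)<0$, while $\psi'(u)>0$ on $(0,u_0)$; and there is at most one $u_1\in(0,u_0)$ with $\psi''(u_1)=0$. (2) If $u_0$ exists, then $\psi'(u)=-u\int_{u_0}^u\sum_{j=1}^m\frac{b_js}{(\tau_j-s^2)^{3/2}}\,ds$ for all $0<u<\sqrt{\tau_m}$; if $u_0$ does not exist, then $|\psi'(u)|\ge u\int_0^u\sum_{j=1}^m\frac{b_js}{(\tau_j-s^2)^{3/2}}\,ds$ for all $0<u<\sqrt{\tau_m}$. (3) If $\sum_{j=1}^m b_j/\sqrt{\tau_j}\le\frac12$, then $\psi'(u)\ge\frac14u$ for all $0<u<\frac12\sqrt{\tau_m}$. If $\sum_{j=1}^m b_j/\sqrt{\tau_j}\ge2$, then $\psi'(u)\le-u$ for all $0<u<\sqrt{\tau_m}$. *)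

theory Defs
  imports "HOL-Analysis.Analysis"
begin

definition psi :: "nat \<Rightarrow> (nat \<Rightarrow> real) \<Rightarrow> (nat \<Rightarrow> real) \<Rightarrow> real \<Rightarrow> real" where
  "psi m b tau u = u\<^sup>2 / 2 + (\<Sum>j=1..m. b j * sqrt (tau j - u\<^sup>2))"

end

theory Submission
  imports Defs
begin

lemma term_sqrt_deriv:
  fixes c x bb :: real
  assumes "0 < c - x\<^sup>2"
  shows "((\<lambda>x. bb * sqrt (c - x\<^sup>2)) has_real_derivative (- (bb * x / sqrt (c - x\<^sup>2)))) (at x)"
  using assms
  by (auto intro!: derivative_eq_intros simp: field_simps)

lemma powr32: "0 < (a::real) \<Longrightarrow> a powr (3/2) = a * sqrt a"
proof -
  assume a: "0 < a"
  have "a powr (3/2) = a powr (1 + 1/2)" by simp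
  also have "\<dots> = a powr 1 * a powr (1/2)" by (rule powr_add)
  finally show ?thesis using a by (simp add: powr_half_sqrt)
qed

lemma term_inv_deriv:
  fixes c x :: real
  assumes "0 < c - x\<^sup>2"
  shows "((\<lambda>x. 1 / sqrt (c - x\<^sup>2)) has_real_derivative (x / (c - x\<^sup>2) powr (3/2))) (at x)"
proof -
  have "((\<lambda>x. 1 / sqrt (c - x\<^sup>2)) has_real_derivative
     (- (1 * ((- (2 * x)) * inverse (sqrt (c - x\<^sup>2)) / 2)) / (sqrt (c - x\<^sup>2))\<^sup>2)) (at x)"
    using assms by (auto intro!: derivative_eq_intros simp: power2_eq_square)
  moreover have "(- (1 * ((- (2 * x)) * inverse (sqrt (c - x\<^sup>2)) / 2)) / (sqrt (c - x\<^sup>2))\<^sup>2)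
      = x / (c - x\<^sup>2) powr (3/2)"
    using assms by (simp add: powr32 field_simps)
  ultimately show ?thesis by simp
qed

lemma sq_lt: "0 \<le> (x::real) \<Longrightarrow> x < sqrt t \<Longrightarrow> x\<^sup>2 < t"
  by (metis not_le power2_less_eq_zero_iff real_le_lsqrt real_sqrt_le_0_iff)

lemma term_inv_deriv2:
  fixes c x bb :: real
  assumes "0 < c - x\<^sup>2"
  shows "((\<lambda>x. bb / sqrt (c - x\<^sup>2)) has_real_derivative (bb * x / (c - x\<^sup>2) powr (3/2))) (at x)"
  using DERIV_cmult[OF term_inv_deriv[OF assms], of bb] by simp

lemma test_cont:
  fixes m :: nat and b tau :: "nat \<Rightarrow> real" and A :: "real set"
  assumes "\<And>j x. j \<in> {1..m} \<Longrightarrow> x \<in> A \<Longrightarrow> 0 < tau j - x\<^sup>2"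
  shows "continuous_on A (\<lambda>s. \<Sum>j=1..m. b j * s / (tau j - s\<^sup>2) powr (3/2))"
  using assms by (auto intro!: continuous_intros) (metis less_irrefl)+

theorem lemma7p1:
  fixes m :: nat and b tau :: "nat \<Rightarrow> real"
  assumes m: "m \<ge> 1"
    and tau_mono: "\<And>i j. 1 \<le> i \<Longrightarrow> i \<le> j \<Longrightarrow> j \<le> m \<Longrightarrow> tau j \<le> tau i"
    and tau_pos: "tau m > 0"
    and b_pos: "\<And>j. 1 \<le> j \<Longrightarrow> j \<le> m \<Longrightarrow> b j > 0"
  shows
    \<comment> \<open>(1)\<close>
    "(\<forall>u0\<in>{0<..<sqrt (tau m)}. \<forall>v0\<in>{0<..<sqrt (tau m)}.
        deriv (psi m b tau) u0 = 0 \<longrightarrow> deriv (psi m b tau) v0 = 0 \<longrightarrow> u0 = v0)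
   \<and> (\<forall>u0\<in>{0<..<sqrt (tau m)}. deriv (psi m b tau) u0 = 0 \<longrightarrow>
        (\<forall>u\<in>{u0<..<sqrt (tau m)}. deriv (psi m b tau) u < 0 \<and> deriv (deriv (psi m b tau)) u < 0)
      \<and> (\<forall>u\<in>{0<..<u0}. deriv (psi m b tau) u > 0)
      \<and> (\<forall>u1\<in>{0<..<u0}. \<forall>u2\<in>{0<..<u0}.
           deriv (deriv (psi m b tau)) u1 = 0 \<longrightarrow> deriv (deriv (psi m b tau)) u2 = 0 \<longrightarrow> u1 = u2))
   \<comment> \<open>(2)\<close>
   \<and> (\<forall>u0\<in>{0<..<sqrt (tau m)}. deriv (psi m b tau) u0 = 0 \<longrightarrow>
        (\<forall>u\<in>{0<..<sqrt (tau m)}. deriv (psi m b tau) u =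
           - u * (LBINT s=ereal u0..ereal u. (\<Sum>j=1..m. b j * s / (tau j - s\<^sup>2) powr (3/2)))))
   \<and> ((\<nexists>u0. u0 \<in> {0<..<sqrt (tau m)} \<and> deriv (psi m b tau) u0 = 0) \<longrightarrow>
        (\<forall>u\<in>{0<..<sqrt (tau m)}. \<bar>deriv (psi m b tau) u\<bar> \<ge>
           u * (LBINT s=ereal 0..ereal u. (\<Sum>j=1..m. b j * s / (tau j - s\<^sup>2) powr (3/2)))))
   \<comment> \<open>(3)\<close>
   \<and> ((\<Sum>j=1..m. b j / sqrt (tau j)) \<le> 1/2 \<longrightarrow>
        (\<forall>u\<in>{0<..<sqrt (tau m) / 2}. deriv (psi m b tau) u \<ge> u / 4))
   \<and> ((\<Sum>j=1..m. b j / sqrt (tau j)) \<ge> 2 \<longrightarrow>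
        (\<forall>u\<in>{0<..<sqrt (tau m)}. deriv (psi m b tau) u \<le> - u))"
proof -
  define f where "f = (\<lambda>s. \<Sum>j=1..m. b j * s / (tau j - s\<^sup>2) powr (3/2))"
  define S where "S = (\<lambda>u. \<Sum>j=1..m. b j / sqrt (tau j - u\<^sup>2))"
  define D1 where "D1 = (\<lambda>u. u * (1 - S u))"
  define D2 where "D2 = (\<lambda>u. 1 - S u - u * f u)"
  have tj: "\<And>j x. j \<in> {1..m} \<Longrightarrow> x\<^sup>2 < tau m \<Longrightarrow> 0 < tau j - x\<^sup>2"
    using tau_mono by fastforce
  have bj: "\<And>j. j \<in> {1..m} \<Longrightarrow> b j > 0" using b_pos by auto
  have dpsi: "(psi m b tau has_real_derivative D1 x) (at x)" if x: "x\<^sup>2 < tau m" for x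
  proof -
    have s: "((\<lambda>x. \<Sum>j=1..m. b j * sqrt (tau j - x\<^sup>2)) has_real_derivative
        (\<Sum>j=1..m. - (b j * x / sqrt (tau j - x\<^sup>2)))) (at x)"
      by (rule DERIV_sum) (use term_sqrt_deriv tj x in auto)
    have q: "((\<lambda>x. x\<^sup>2 / 2) has_real_derivative x) (at x)"
      by (auto intro!: derivative_eq_intros)
    have e: "x + (\<Sum>j=1..m. - (b j * x / sqrt (tau j - x\<^sup>2))) = D1 x"
      by (simp add: D1_def S_def sum_negf sum_distrib_left algebra_simps)
    have eq: "psi m b tau = (\<lambda>x. x\<^sup>2 / 2 + (\<Sum>j=1..m. b j * sqrt (tau j - x\<^sup>2)))"
      by (simp add: fun_eq_iff psi_def)
    show ?thesis using DERIV_add[OF q s] unfolding eq e .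
  qed
  have dS: "(S has_real_derivative f x) (at x)" if x: "x\<^sup>2 < tau m" for x
    unfolding S_def f_def
    by (rule DERIV_sum) (use term_inv_deriv2 tj x in auto)
  have dD1: "(D1 has_real_derivative D2 x) (at x)" if x: "x\<^sup>2 < tau m" for x
  proof -
    have "((\<lambda>x. x * (1 - S x)) has_real_derivative 1 * (1 - S x) + (0 - f x) * x) (at x)"
      by (rule DERIV_mult[OF DERIV_ident DERIV_diff[OF DERIV_const dS[OF x]]])
    then show ?thesis by (simp add: D1_def D2_def algebra_simps)
  qed
  have opA: "open {x::real. x\<^sup>2 < tau m}"
    by (rule open_Collect_less) (auto intro: continuous_intros)
  have d1eq: "deriv (psi m b tau) x = D1 x" if "x\<^sup>2 < tau m" for x
    using DERIV_imp_deriv[OF dpsi[OF that]] .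
  have d2eq: "deriv (deriv (psi m b tau)) x = D2 x" if x: "x\<^sup>2 < tau m" for x
  proof -
    have "(deriv (psi m b tau) has_real_derivative D2 x) (at x)"
      by (rule has_field_derivative_transform_within_open[OF dD1[OF x] opA])
         (use x d1eq in auto)
    then show ?thesis by (rule DERIV_imp_deriv)
  qed
  have Ssq: "x\<^sup>2 < tau m" if "x \<in> {0<..<sqrt (tau m)}" for x
    using that sq_lt by auto
  have Smono: "S u < S v" if "0 \<le> u" "u < v" "v\<^sup>2 < tau m" for u v
    unfolding S_def
  proof (rule sum_strict_mono)
    show "{1..m} \<noteq> {}" using m by auto
    fix j assume j: "j \<in> {1..m}"
    have uv: "u\<^sup>2 < v\<^sup>2" using that by (simp add: power_strict_mono)
    have p: "0 < tau j - v\<^sup>2" using tj[OF j that(3)] .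
    have "sqrt (tau j - v\<^sup>2) < sqrt (tau j - u\<^sup>2)" using uv by simp
    then show "b j / sqrt (tau j - u\<^sup>2) < b j / sqrt (tau j - v\<^sup>2)"
      using bj[OF j] p uv by (intro divide_strict_left_mono) auto
  qed simp
  have Smono': "S u \<le> S v" if "0 \<le> u" "u \<le> v" "v\<^sup>2 < tau m" for u v
    using Smono[OF that(1) _ that(3)] that(2) by (cases "u = v") auto
  have Umono: "u * f u \<le> v * f v" if "0 \<le> u" "u \<le> v" "v\<^sup>2 < tau m" for u v
  proof -
    have uv: "u\<^sup>2 \<le> v\<^sup>2" using that by (simp add: power_mono)
    have "u * f u = (\<Sum>j=1..m. b j * u\<^sup>2 / (tau j - u\<^sup>2) powr (3/2))"
      by (simp add: f_def sum_distrib_left power2_eq_square mult.assoc mult.left_commute)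
    also have "\<dots> \<le> (\<Sum>j=1..m. b j * v\<^sup>2 / (tau j - v\<^sup>2) powr (3/2))"
    proof (rule sum_mono)
      fix j assume j: "j \<in> {1..m}"
      have p: "0 < tau j - v\<^sup>2" using tj[OF j that(3)] .
      show "b j * u\<^sup>2 / (tau j - u\<^sup>2) powr (3/2) \<le> b j * v\<^sup>2 / (tau j - v\<^sup>2) powr (3/2)"
        using bj[OF j] p uv
        by (intro frac_le mult_left_mono powr_mono2) auto
    qed
    also have "\<dots> = v * f v"
      by (simp add: f_def sum_distrib_left power2_eq_square mult.assoc mult.left_commute)
    finally show ?thesis .
  qed
  have fpos: "0 < f x" if "0 < x" "x\<^sup>2 < tau m" for x
    unfolding f_def
  proof (rule sum_pos)
    show "{1..m} \<noteq> {}" using m by auto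
    fix j assume j: "j \<in> {1..m}"
    have "0 < tau j - x\<^sup>2" using tj[OF j that(2)] .
    then show "0 < b j * x / (tau j - x\<^sup>2) powr (3/2)" using bj[OF j] that(1) by simp
  qed simp
  have INT: "(LBINT s=ereal a..ereal c. (\<Sum>j=1..m. b j * s / (tau j - s\<^sup>2) powr (3/2))) = S c - S a"
    if a: "0 \<le> a" "a\<^sup>2 < tau m" and c: "0 \<le> c" "c\<^sup>2 < tau m" for a c
  proof -
    have inI: "x\<^sup>2 < tau m" if "x \<in> {min a c..max a c}" for x
    proof -
      have "0 \<le> x" "x \<le> max a c" using that a c by auto
      then have "x\<^sup>2 \<le> (max a c)\<^sup>2" by (simp add: power_mono)
      moreover have "(max a c)\<^sup>2 < tau m" using a c by (cases "a \<le> c") (auto simp: max_def)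
      ultimately show ?thesis by linarith
    qed
    have "(LBINT s=a..c. f s) = S c - S a"
    proof (rule interval_integral_FTC_finite)
      show "continuous_on {min a c..max a c} f"
        unfolding f_def by (rule test_cont) (use tj inI in auto)
      fix x assume "min a c \<le> x" "x \<le> max a c"
      then have "x\<^sup>2 < tau m" using inI by auto
      then show "(S has_vector_derivative f x) (at x within {min a c..max a c})"
        using dS has_real_derivative_iff_has_vector_derivative has_vector_derivative_at_within by blast
    qed
    then show ?thesis by (simp add: f_def)
  qed
  let ?I = "{0<..<sqrt (tau m)}"
  have D2mono: "D2 v < D2 u" if "0 \<le> u" "u < v" "v\<^sup>2 < tau m" for u v
    using Smono[OF that] Umono[OF that(1) _ that(3)] that(2) unfolding D2_def by force
  have P1: "\<forall>u0\<in>?I. \<forall>v0\<in>?I. deriv (psi m b tau) u0 = 0 \<longrightarrow> deriv (psi m b tau) v0 = 0 \<longrightarrow> u0 = v0"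
  proof (intro ballI impI)
    fix u0 v0 assume u: "u0 \<in> ?I" and v: "v0 \<in> ?I"
      and "deriv (psi m b tau) u0 = 0" "deriv (psi m b tau) v0 = 0"
    then have "S u0 = 1" "S v0 = 1" using d1eq Ssq by (auto simp: D1_def)
    then show "u0 = v0" using Smono[of u0 v0] Smono[of v0 u0] u v Ssq
      by (cases u0 v0 rule: linorder_cases) auto
  qed
  have P2: "\<forall>u0\<in>?I. deriv (psi m b tau) u0 = 0 \<longrightarrow>
        (\<forall>u\<in>{u0<..<sqrt (tau m)}. deriv (psi m b tau) u < 0 \<and> deriv (deriv (psi m b tau)) u < 0)
      \<and> (\<forall>u\<in>{0<..<u0}. deriv (psi m b tau) u > 0)
      \<and> (\<forall>u1\<in>{0<..<u0}. \<forall>u2\<in>{0<..<u0}.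
           deriv (deriv (psi m b tau)) u1 = 0 \<longrightarrow> deriv (deriv (psi m b tau)) u2 = 0 \<longrightarrow> u1 = u2)"
  proof (intro ballI impI conjI)
    fix u0 assume u0: "u0 \<in> ?I" and "deriv (psi m b tau) u0 = 0"
    then have S1: "S u0 = 1" using d1eq Ssq by (auto simp: D1_def)
    {
      fix u assume u: "u \<in> {u0<..<sqrt (tau m)}"
      then have uI: "u \<in> ?I" using u0 by auto
      have "S u > 1" using Smono[of u0 u] u0 u Ssq[OF uI] S1 by auto
      then show "deriv (psi m b tau) u < 0"
        using d1eq[OF Ssq[OF uI]] uI by (simp add: D1_def mult_pos_neg)
      show "deriv (deriv (psi m b tau)) u < 0"
        using d2eq[OF Ssq[OF uI]] fpos[OF _ Ssq[OF uI]] uI \<open>S u > 1\<close>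
        by (simp add: D2_def) (smt (verit) mult_pos_pos)
    next
      fix u assume u: "u \<in> {0<..<u0}"
      then have uI: "u \<in> ?I" using u0 by auto
      have "S u < 1" using Smono[of u u0] u0 u Ssq[OF u0] S1 by auto
      then show "deriv (psi m b tau) u > 0"
        using d1eq[OF Ssq[OF uI]] uI by (simp add: D1_def)
    next
      fix u1 u2 assume u1: "u1 \<in> {0<..<u0}" and u2: "u2 \<in> {0<..<u0}"
        and "deriv (deriv (psi m b tau)) u1 = 0" "deriv (deriv (psi m b tau)) u2 = 0"
      moreover have "u1 \<in> ?I" "u2 \<in> ?I" using u1 u2 u0 by auto
      ultimately have "D2 u1 = 0" "D2 u2 = 0" using d2eq Ssq by auto
      then show "u1 = u2" using D2mono[of u1 u2] D2mono[of u2 u1] \<open>u1 \<in> ?I\<close> \<open>u2 \<in> ?I\<close> Ssq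
        by (cases u1 u2 rule: linorder_cases) auto
    }
  qed
  have P3: "\<forall>u0\<in>?I. deriv (psi m b tau) u0 = 0 \<longrightarrow>
        (\<forall>u\<in>?I. deriv (psi m b tau) u =
           - u * (LBINT s=ereal u0..ereal u. (\<Sum>j=1..m. b j * s / (tau j - s\<^sup>2) powr (3/2))))"
  proof (intro ballI impI)
    fix u0 u assume u0: "u0 \<in> ?I" and "deriv (psi m b tau) u0 = 0" and u: "u \<in> ?I"
    then have S1: "S u0 = 1" using d1eq Ssq by (auto simp: D1_def)
    show "deriv (psi m b tau) u =
           - u * (LBINT s=ereal u0..ereal u. (\<Sum>j=1..m. b j * s / (tau j - s\<^sup>2) powr (3/2)))"
    proof -
      have i: "(LBINT s=ereal u0..ereal u. (\<Sum>j=1..m. b j * s / (tau j - s\<^sup>2) powr (3/2))) = S u - S u0"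
        using u0 u Ssq by (intro INT) auto
      show ?thesis unfolding i d1eq[OF Ssq[OF u]] S1 by (simp add: D1_def algebra_simps)
    qed
  qed
  obtain w where w: "0 < w" "w\<^sup>2 < tau m" "S w > 1"
  proof -
    define d where "d = min (tau m / 2) ((b m)\<^sup>2 / 2)"
    have bm: "b m > 0" using b_pos m by auto
    have d: "0 < d" "d < tau m" "d < (b m)\<^sup>2" proof -
      have "0 < (b m)\<^sup>2" using bm by simp
      then show "0 < d" "d < tau m" "d < (b m)\<^sup>2" using tau_pos by (auto simp: d_def min_def)
    qed
    define w where "w = sqrt (tau m - d)"
    have w2: "w\<^sup>2 = tau m - d" using d by (simp add: w_def)
    have "0 < w" using d by (simp add: w_def)
    moreover have "w\<^sup>2 < tau m" using w2 d by simp
    moreover have "S w > 1"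
    proof -
      have "sqrt d < sqrt ((b m)\<^sup>2)" using d(3) by (simp only: real_sqrt_less_iff)
      then have "sqrt (tau m - w\<^sup>2) < b m" using w2 bm by simp
      then have "1 < b m / sqrt (tau m - w\<^sup>2)" using d w2 by simp
      also have "\<dots> \<le> S w" unfolding S_def
      proof (rule member_le_sum)
        show "m \<in> {1..m}" using m by auto
        fix j assume "j \<in> {1..m} - {m}"
        then have "j \<in> {1..m}" by auto
        then show "0 \<le> b j / sqrt (tau j - w\<^sup>2)" using bj tj[OF _ \<open>w\<^sup>2 < tau m\<close>]
          by (simp add: less_imp_le)
      qed simp
      finally show ?thesis .
    qed
    ultimately show ?thesis using that by blast
  qed
  have P4: "(\<nexists>u0. u0 \<in> ?I \<and> deriv (psi m b tau) u0 = 0) \<longrightarrow>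
        (\<forall>u\<in>?I. \<bar>deriv (psi m b tau) u\<bar> \<ge>
           u * (LBINT s=ereal 0..ereal u. (\<Sum>j=1..m. b j * s / (tau j - s\<^sup>2) powr (3/2))))"
  proof (intro impI ballI)
    assume nz: "\<nexists>u0. u0 \<in> ?I \<and> deriv (psi m b tau) u0 = 0"
    have ge: "S a \<ge> 1" if a: "0 \<le> a" "a\<^sup>2 < tau m" for a
    proof (rule ccontr)
      assume "\<not> S a \<ge> 1"
      then have Sa: "S a < 1" by simp
      have aw: "a \<le> w" using Smono'[of w a] w a Sa by force
      have cont: "continuous_on {a..w} S"
      proof (rule continuous_at_imp_continuous_on, intro ballI)
        fix x assume "x \<in> {a..w}"
        then have "0 \<le> x" "x \<le> w" using a(1) by auto
        then have "x\<^sup>2 \<le> w\<^sup>2" by (simp add: power_mono)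
        then have "x\<^sup>2 < tau m" using w(2) by linarith
        then show "isCont S x" using dS DERIV_isCont by blast
      qed
      obtain x where x: "a \<le> x" "x \<le> w" "S x = 1"
        using IVT'[of S a 1 w] Sa w(3) aw cont by auto
      have "x \<noteq> a" using Sa x by auto
      then have "0 < x" using x a by auto
      have "x\<^sup>2 \<le> w\<^sup>2" using x \<open>0 < x\<close> by (simp add: power_mono)
      then have "x\<^sup>2 < tau m" using w(2) by linarith
      then have "x < sqrt (tau m)" using \<open>0 < x\<close> real_less_rsqrt by blast
      then have "x \<in> ?I" using \<open>0 < x\<close> by auto
      moreover have "deriv (psi m b tau) x = 0" using d1eq[OF \<open>x\<^sup>2 < tau m\<close>] x by (simp add: D1_def)
      ultimately show False using nz by blast
    qed
    fix u assume u: "u \<in> ?I"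
    have S0: "S 0 \<ge> 1" using ge tau_pos by auto
    have "u * (S u - S 0) \<le> u * (S u - 1)" using S0 u by (intro mult_left_mono) auto
    also have "\<dots> \<le> \<bar>deriv (psi m b tau) u\<bar>" using d1eq[OF Ssq[OF u]] u
      by (simp add: D1_def abs_mult algebra_simps)
    finally show "\<bar>deriv (psi m b tau) u\<bar> \<ge>
           u * (LBINT s=ereal 0..ereal u. (\<Sum>j=1..m. b j * s / (tau j - s\<^sup>2) powr (3/2)))"
      using INT[of 0 u] u Ssq[OF u] tau_pos by simp
  qed
  have P5: "(\<Sum>j=1..m. b j / sqrt (tau j)) \<le> 1/2 \<longrightarrow>
        (\<forall>u\<in>{0<..<sqrt (tau m) / 2}. deriv (psi m b tau) u \<ge> u / 4)"
  proof (intro impI ballI)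
    assume sm: "(\<Sum>j=1..m. b j / sqrt (tau j)) \<le> 1/2"
    fix u assume u: "u \<in> {0<..<sqrt (tau m) / 2}"
    have u4: "u\<^sup>2 < tau m / 4"
    proof -
      have "u\<^sup>2 < (sqrt (tau m) / 2)\<^sup>2" using u by (intro power_strict_mono) auto
      then show ?thesis using tau_pos by (simp add: power_divide)
    qed
    then have usq: "u\<^sup>2 < tau m" using tau_pos by linarith
    have "S u \<le> (\<Sum>j=1..m. 3/2 * (b j / sqrt (tau j)))" unfolding S_def
    proof (rule sum_mono)
      fix j assume j: "j \<in> {1..m}"
      have tjm: "tau m \<le> tau j" using tau_mono j by auto
      have "(sqrt (tau j) * (2/3))\<^sup>2 \<le> tau j - u\<^sup>2"
        using u4 tjm tau_pos by (simp add: power_mult_distrib power_divide)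
      then have le: "sqrt (tau j) * (2/3) \<le> sqrt (tau j - u\<^sup>2)" by (rule real_le_rsqrt)
      have "0 < sqrt (tau j)" using tjm tau_pos by simp
      then have "b j / sqrt (tau j - u\<^sup>2) \<le> b j / (sqrt (tau j) * (2/3))"
        using le bj[OF j] tj[OF j usq] by (intro divide_left_mono) auto
      then show "b j / sqrt (tau j - u\<^sup>2) \<le> 3/2 * (b j / sqrt (tau j))" by simp
    qed
    also have "\<dots> = 3/2 * (\<Sum>j=1..m. b j / sqrt (tau j))" by (rule sum_distrib_left[symmetric])
    also have "\<dots> \<le> 3/4" using sm by linarith
    finally have "S u \<le> 3/4" .
    then show "deriv (psi m b tau) u \<ge> u / 4" using d1eq[OF usq] u
      by (simp add: D1_def)
  qed
  have P6: "(\<Sum>j=1..m. b j / sqrt (tau j)) \<ge> 2 \<longrightarrow>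
        (\<forall>u\<in>?I. deriv (psi m b tau) u \<le> - u)"
  proof (intro impI ballI)
    assume sm: "(\<Sum>j=1..m. b j / sqrt (tau j)) \<ge> 2"
    fix u assume u: "u \<in> ?I"
    have "S 0 \<le> S u" using Smono'[of 0 u] u Ssq[OF u] by auto
    moreover have "S 0 = (\<Sum>j=1..m. b j / sqrt (tau j))" by (simp add: S_def)
    ultimately have "S u \<ge> 2" using sm by linarith
    then have "u * (1 - S u) \<le> u * (-1)" using u by (intro mult_left_mono) auto
    then show "deriv (psi m b tau) u \<le> - u" using d1eq[OF Ssq[OF u]]
      by (simp add: D1_def)
  qed
  show ?thesis using P1 P2 P3 P4 P5 P6 by blast
qed

end
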